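(* Every closed semi-smooth subset of $\mathbb{C}$ is a $2$-dimensional topological manifold with boundary.
   Context: Let $B\subset\mathbb{C}$ be closed. For $z\in\partial B$, a vector $\mathbf v\in T_z\mathbb{C}\cong\mathbb{C}$ is normal to $B$ if $\mathbf v\neq 0$ and for every $\theta\in(0,\pi/2)$ there is $\delta>0$ such that the open sector $\{z+te^{i\phi}\mathbf v/|\mathbf v| : \phi\in(-\theta,\theta),\ t\in(0,\delta)\}$ is disjoint from $B$. The closed set $B$ is semi-smooth if (i) for every $z\in\partial B$ the set of vectors normal to $B$ at $z$ is non-empty and convex, and (ii) any non-zero limit of normal vectors is normal: if $z_n\in\partial B$, $\mathbf v_n$ is normal to $B$ at $z_n$, $z_n\to z$ and $\mathbf v_n\to\mathbf v\neq 0$, then $\mathbf v$ is normal to $B$ at $z$. *)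

theory Defs
  imports "HOL-Analysis.Analysis"
begin

definition open_sector :: "complex \<Rightarrow> complex \<Rightarrow> real \<Rightarrow> real \<Rightarrow> complex set" where
  "open_sector z v \<theta> \<delta> =
     {z + complex_of_real t * cis \<phi> * (v / complex_of_real (norm v)) | \<phi> t.
        \<phi> \<in> {-\<theta><..<\<theta>} \<and> t \<in> {0<..<\<delta>}}"

text \<open>v is normal to B at z (z is meant to be a boundary point of B).\<close>
definition normal_vector :: "complex set \<Rightarrow> complex \<Rightarrow> complex \<Rightarrow> bool" where
  "normal_vector B z v \<longleftrightarrow> v \<noteq> 0 \<and>
     (\<forall>\<theta> \<in> {0<..<pi/2}. \<exists>\<delta>>0. open_sector z v \<theta> \<delta> \<inter> B = {})"

definition semi_smooth :: "complex set \<Rightarrow> bool" where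
  "semi_smooth B \<longleftrightarrow> closed B \<and>
     (\<forall>z \<in> frontier B. {v. normal_vector B z v} \<noteq> {} \<and> convex {v. normal_vector B z v}) \<and>
     (\<forall>zs vs z v. (\<forall>n. zs n \<in> frontier B \<and> normal_vector B (zs n) (vs n)) \<and>
        zs \<longlonglongrightarrow> z \<and> vs \<longlonglongrightarrow> v \<and> v \<noteq> 0 \<longrightarrow> normal_vector B z v)"

definition upper_half_plane :: "complex set" where
  "upper_half_plane = {w. Im w \<ge> 0}"

text \<open>A subset of C (with the subspace topology, automatically Hausdorff and second countable)
  is a 2-dimensional topological manifold with boundary if every point has a relatively open
  neighbourhood homeomorphic to a relatively open subset of the closed half-plane.\<close>
definition manifold_with_boundary_2 :: "complex set \<Rightarrow> bool" where
  "manifold_with_boundary_2 M \<longleftrightarrow>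
     (\<forall>x \<in> M. \<exists>U V. x \<in> U \<and> openin (top_of_set M) U \<and>
        openin (top_of_set upper_half_plane) V \<and> U homeomorphic V)"

end

theory Submission
  imports Defs
begin


lemma normal_scale:
  assumes "normal_vector B z u" "k > 0"
  shows "normal_vector B z (of_real k * u)"
proof -
  have u: "u \<noteq> 0" using assms(1) by (simp add: normal_vector_def)
  have e: "(of_real k * u) / of_real (norm (of_real k * u)) = u / of_real (norm u)"
    using assms(2) u by (simp add: norm_mult)
  have "open_sector z (of_real k * u) = open_sector z u"
    by (rule ext)+ (simp add: open_sector_def e)
  then show ?thesis using assms u by (simp add: normal_vector_def)
qed

lemma normal_unit:
  assumes "normal_vector B z u"
  shows "normal_vector B z (u / of_real (norm u))"
proof -
  have u: "u \<noteq> 0" using assms(1) by (simp add: normal_vector_def)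
  have "u / of_real (norm u) = of_real (1/norm u) * u" by simp
  then show ?thesis using normal_scale[OF assms, of "1/norm u"] u by simp
qed

lemma normal_free:
  assumes "normal_vector B z u"
  shows "\<exists>\<delta>>0. \<forall>t. 0 < t \<and> t < \<delta> \<longrightarrow> z + of_real t * (u / of_real (norm u)) \<notin> B"
proof -
  have "pi/4 \<in> {0<..<pi/2}" by (simp add: pi_gt_zero)
  then obtain \<delta> where d: "\<delta> > 0" "open_sector z u (pi/4) \<delta> \<inter> B = {}"
    using assms unfolding normal_vector_def by blast
  have "z + of_real t * (u / of_real (norm u)) \<in> open_sector z u (pi/4) \<delta>" if "0 < t" "t < \<delta>" for t
    unfolding open_sector_def
    apply (rule CollectI, rule exI[of _ 0], rule exI[of _ t])
    using that by (simp add: pi_gt_zero)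
  then show ?thesis using d by blast
qed

lemma normal_not_interior:
  assumes "normal_vector B z u"
  shows "z \<notin> interior B"
proof
  assume "z \<in> interior B"
  then obtain e where e: "e > 0" "ball z e \<subseteq> B" by (meson mem_interior)
  obtain \<delta> where d: "\<delta> > 0" "\<forall>t. 0 < t \<and> t < \<delta> \<longrightarrow> z + of_real t * (u / of_real (norm u)) \<notin> B"
    using normal_free[OF assms] by blast
  have u: "u \<noteq> 0" using assms by (simp add: normal_vector_def)
  define t where "t = min \<delta> e / 2"
  have t: "0 < t" "t < \<delta>" "t < e" using d e by (auto simp: t_def)
  have "z + of_real t * (u / of_real (norm u)) \<in> ball z e"
    using t u by (simp add: dist_norm norm_mult norm_divide)
  then show False using e d t by blast
qed

lemma key:
  fixes B :: "complex set" and q d :: complex and s \<rho> :: real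
  assumes cl: "closed B" and d: "d \<noteq> 0" and s: "s > 0" and \<rho>: "\<rho> > 0"
    and free: "cball q (\<rho> * norm d) \<inter> B = {}"
    and pB: "q + of_real s * d \<in> B"
    and hyp: "\<And>w u. w \<in> frontier B \<Longrightarrow> w \<in> cball q ((\<rho> + s) * norm d) \<Longrightarrow> normal_vector B w u \<Longrightarrow> inner u d > 0"
  shows False
proof -
  define Hc where "Hc w = Im ((w - q)/d)" for w
  define Tc where "Tc w = Re ((w - q)/d)" for w
  define K where "K = s / \<rho>^2"
  define \<phi> where "\<phi> w = Tc w + K * (Hc w)^2" for w
  define S where "S = {w. \<phi> w \<le> s \<and> 0 \<le> Tc w}"
  have K: "K > 0" using s \<rho> by (simp add: K_def)
  have nd: "norm d > 0" using d by simp
  have cont: "continuous_on UNIV \<phi>" unfolding \<phi>_def Tc_def Hc_def by (intro continuous_intros) (use d in auto)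
  have contT: "continuous_on UNIV Tc" unfolding Tc_def by (intro continuous_intros) (use d in auto)
  have normw: "norm (w - q) = norm (Complex (Tc w) (Hc w)) * norm d" for w
  proof -
    have "Complex (Tc w) (Hc w) = (w - q)/d" by (simp add: Tc_def Hc_def complex_eq_iff)
    then show ?thesis using d by (simp add: norm_divide)
  qed
  have Sbd: "\<bar>Hc w\<bar> \<le> \<rho> \<and> 0 \<le> Tc w \<and> Tc w \<le> s" if "w \<in> S" for w
  proof -
    have 1: "0 \<le> Tc w" "Tc w + K * (Hc w)^2 \<le> s" using that by (auto simp: S_def \<phi>_def)
    have "0 \<le> K * (Hc w)^2" using K by simp
    then have 2: "Tc w \<le> s" using 1 by linarith
    have "K * (Hc w)^2 \<le> s" using 1 by linarith
    then have "(Hc w)^2 \<le> s / K" using K by (simp add: field_simps)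
    also have "s / K = \<rho>^2" using s \<rho> by (simp add: K_def)
    finally have "\<bar>Hc w\<bar> \<le> \<rho>" using \<rho> power2_le_iff_abs_le[of \<rho> "Hc w"] by simp
    then show ?thesis using 1 2 by simp
  qed
  have Sc: "S \<subseteq> cball q ((\<rho> + s) * norm d)"
  proof
    fix w assume w: "w \<in> S"
    have "norm (Complex (Tc w) (Hc w)) \<le> \<bar>Tc w\<bar> + \<bar>Hc w\<bar>" using cmod_le[of "Complex (Tc w) (Hc w)"] by simp
    also have "\<dots> \<le> \<rho> + s" using Sbd[OF w] by simp
    finally show "w \<in> cball q ((\<rho> + s) * norm d)"
      using normw[of w] nd by (simp add: dist_norm norm_minus_commute mult_right_mono)
  qed
  have clS: "closed S" unfolding S_def
    by (intro closed_Collect_conj closed_Collect_le continuous_intros cont contT)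
  have cpS: "compact (S \<inter> B)"
    using clS cl Sc by (meson bounded_cball bounded_subset closed_Int compact_eq_bounded_closed inf.coboundedI1)
  have pS: "q + of_real s * d \<in> S" using s d by (simp add: S_def \<phi>_def Tc_def Hc_def)
  obtain m where m: "m \<in> S \<inter> B" and mmin: "\<And>y. y \<in> S \<inter> B \<Longrightarrow> \<phi> m \<le> \<phi> y"
    using continuous_attains_inf[OF cpS _ continuous_on_subset[OF cont]] pS pB by blast
  have Tm: "Tc m > 0"
  proof (rule ccontr)
    assume "\<not> Tc m > 0"
    then have "Tc m = 0" using Sbd m by force
    moreover have "norm (Complex 0 (Hc m)) \<le> \<bar>0\<bar> + \<bar>Hc m\<bar>" using cmod_le[of "Complex 0 (Hc m)"] by simp
    ultimately have "norm (m - q) \<le> \<rho> * norm d" using normw[of m] Sbd[of m] m nd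
      by (simp add: mult_right_mono)
    then have "m \<in> cball q (\<rho> * norm d)" by (simp add: dist_norm norm_minus_commute)
    then show False using free m by blast
  qed
  define c where "c = 2 * K * Hc m"
  define \<gamma> where "\<gamma> = Complex 1 c"
  define u where "u = - (\<gamma> * d)"
  have g0: "\<gamma> \<noteq> 0" by (simp add: \<gamma>_def complex_eq_iff)
  have ng: "norm \<gamma> > 0" using g0 by simp
  have u0: "u \<noteq> 0" using g0 d by (simp add: u_def)
  have nu: "norm u = norm \<gamma> * norm d" by (simp add: u_def norm_mult)
  have ng2: "(norm \<gamma>)^2 = 1 + c^2" by (simp add: \<gamma>_def cmod_power2)
  have normal: "normal_vector B m u"
    unfolding normal_vector_def
  proof (intro conjI ballI)
    show "u \<noteq> 0" by fact
    fix \<theta> assume th: "\<theta> \<in> {0<..<pi/2}"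
    define \<delta> where "\<delta> = min (cos \<theta> * norm \<gamma> * norm d / K) (Tc m * norm d)"
    have cth: "cos \<theta> > 0" using th by (auto intro!: cos_gt_zero)
    have dpos: "\<delta> > 0" using cth ng nd K Tm by (simp add: \<delta>_def)
    have "open_sector m u \<theta> \<delta> \<inter> B = {}"
    proof (rule ccontr)
      assume "open_sector m u \<theta> \<delta> \<inter> B \<noteq> {}"
      then obtain \<psi> t where pt: "\<psi> \<in> {-\<theta><..<\<theta>}" "t \<in> {0<..<\<delta>}"
          and wB: "m + of_real t * cis \<psi> * (u / of_real (norm u)) \<in> B"
        unfolding open_sector_def by blast
      define w where "w = m + of_real t * cis \<psi> * (u / of_real (norm u))"
      define \<zeta> where "\<zeta> = of_real t * cis \<psi> * (u / of_real (norm u)) / d"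
      define A where "A = t / (norm \<gamma> * norm d)"
      have t0: "t > 0" "t < \<delta>" using pt by auto
      have z1: "\<zeta> = - of_real A * (cis \<psi> * \<gamma>)"
        using d g0 by (simp add: \<zeta>_def A_def u_def nu norm_mult field_simps)
      have reZ: "Re \<zeta> = - A * (cos \<psi> - sin \<psi> * c)" and imZ: "Im \<zeta> = - A * (sin \<psi> + cos \<psi> * c)"
        by (simp_all add: z1 \<gamma>_def cis.sel algebra_simps)
      have key1: "Re \<zeta> + c * Im \<zeta> = - A * cos \<psi> * (1 + c^2)"
        by (simp add: reZ imZ power2_eq_square algebra_simps)
      also have "\<dots> = - A * cos \<psi> * (norm \<gamma>)^2" by (simp add: ng2)
      also have "\<dots> = - t * cos \<psi> * norm \<gamma> / norm d"
        using ng nd by (simp add: A_def power2_eq_square field_simps)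
      finally have key1: "Re \<zeta> + c * Im \<zeta> = - t * cos \<psi> * norm \<gamma> / norm d" .
      have nz: "norm \<zeta> = t / norm d"
        using t0 u0 by (simp add: \<zeta>_def norm_mult norm_divide)
      have imb: "(Im \<zeta>)^2 \<le> (t / norm d)^2"
        using abs_Im_le_cmod[of \<zeta>] nz t0 nd power2_le_iff_abs_le[of "t / norm d" "Im \<zeta>"] by simp
      have reb: "\<bar>Re \<zeta>\<bar> \<le> t / norm d" using abs_Re_le_cmod[of \<zeta>] nz by simp
      have wq: "(w - q)/d = (m - q)/d + \<zeta>" using d by (simp add: w_def \<zeta>_def field_simps)
      have Tw: "Tc w = Tc m + Re \<zeta>" and Hw: "Hc w = Hc m + Im \<zeta>"
        by (simp_all add: Tc_def Hc_def wq)
      have cpsi: "cos \<theta> \<le> cos \<psi>"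
      proof -
        have "cos \<theta> \<le> cos \<bar>\<psi>\<bar>" using pt th by (intro cos_monotone_0_pi_le) auto
        then show ?thesis by simp
      qed
      have tK: "K * t < cos \<psi> * norm \<gamma> * norm d"
      proof -
        have "t < cos \<theta> * norm \<gamma> * norm d / K" using t0 by (simp add: \<delta>_def)
        then have "K * t < cos \<theta> * norm \<gamma> * norm d" using K by (simp add: field_simps)
        also have "\<dots> \<le> cos \<psi> * norm \<gamma> * norm d" using cpsi ng nd by (simp add: mult_right_mono)
        finally show ?thesis .
      qed
      have "\<phi> w = \<phi> m + (Re \<zeta> + c * Im \<zeta>) + K * (Im \<zeta>)^2"
        by (simp add: \<phi>_def Tw Hw c_def power2_eq_square algebra_simps)
      also have "\<dots> \<le> \<phi> m - t * cos \<psi> * norm \<gamma> / norm d + K * (t / norm d)^2"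
        using key1 imb K by (simp add: mult_left_mono)
      also have "\<dots> < \<phi> m"
      proof -
        have "K * (t / norm d)^2 = (t / (norm d)^2) * (K * t)" by (simp add: power2_eq_square)
        also have "\<dots> < (t / (norm d)^2) * (cos \<psi> * norm \<gamma> * norm d)"
          using tK t0 nd by (intro mult_strict_left_mono) auto
        also have "\<dots> = t * cos \<psi> * norm \<gamma> / norm d" using nd by (simp add: power2_eq_square field_simps)
        finally show ?thesis by simp
      qed
      finally have lt: "\<phi> w < \<phi> m" .
      have "Tc w > 0"
      proof -
        have "t < Tc m * norm d" using t0 by (simp add: \<delta>_def)
        then have "t / norm d < Tc m" using nd by (simp add: field_simps)
        then show ?thesis using Tw reb by linarith
      qed
      moreover have "\<phi> w \<le> s" using lt m by (auto simp: S_def)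
      ultimately have "w \<in> S" by (simp add: S_def)
      then have "\<phi> m \<le> \<phi> w" using mmin wB w_def by blast
      then show False using lt by simp
    qed
    then show "\<exists>\<delta>>0. open_sector m u \<theta> \<delta> \<inter> B = {}" using dpos by blast
  qed
  have "m \<in> frontier B"
    using m normal_not_interior[OF normal] cl by (simp add: frontier_def closure_closed)
  then have "inner u d > 0" using hyp m Sc normal by blast
  moreover have "inner u d = - ((norm d)^2)"
    using cmod_power2[of d] by (simp add: u_def \<gamma>_def inner_complex_def algebra_simps power2_eq_square)
  ultimately show False using nd by simp
qed


lemma ss_lim:
  assumes "semi_smooth B" "\<And>n. zs n \<in> frontier B" "\<And>n. normal_vector B (zs n) (vs n)"
    "zs \<longlonglongrightarrow> z" "vs \<longlonglongrightarrow> v" "v \<noteq> 0"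
  shows "normal_vector B z v"
  using assms unfolding semi_smooth_def by blast

lemma cone_sep:
  assumes ss: "semi_smooth B" and z: "z \<in> frontier B"
  shows "\<exists>v c. norm v = 1 \<and> 0 < c \<and> c \<le> 1 \<and> (\<forall>u. normal_vector B z u \<longrightarrow> inner u v > c * norm u)"
proof -
  define N where "N = {u. normal_vector B z u}"
  have cN: "convex N" using ss z by (simp add: semi_smooth_def N_def)
  have 0: "0 \<notin> N" by (simp add: N_def normal_vector_def)
  define K where "K = N \<inter> sphere 0 1"
  have clK: "closed K" unfolding closed_sequential_limits
  proof (intro allI impI)
    fix x l assume h: "(\<forall>n. x n \<in> K) \<and> x \<longlonglongrightarrow> l"
    have "(\<lambda>n. norm (x n)) \<longlonglongrightarrow> norm l" using h by (intro tendsto_intros) auto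
    moreover have "(\<lambda>n. norm (x n)) = (\<lambda>n. 1)" using h by (auto simp: K_def)
    ultimately have "(\<lambda>n. 1::real) \<longlonglongrightarrow> norm l" by simp
    then have nl: "norm l = 1" by (simp add: LIMSEQ_const_iff)
    have "normal_vector B z l"
      by (rule ss_lim[OF ss, of "\<lambda>n. z" x]) (use h z nl in \<open>auto simp: K_def N_def\<close>)
    then show "l \<in> K" using nl by (simp add: K_def N_def)
  qed
  have "bounded K" by (rule bounded_subset[OF bounded_sphere[of 0 1]]) (auto simp: K_def)
  then have cpK: "compact K" using clK by (simp add: compact_eq_bounded_closed)
  have hK: "convex hull K \<subseteq> N" by (rule hull_minimal) (use cN in \<open>auto simp: K_def\<close>)
  have 0: "0 \<notin> convex hull K" using hK 0 by blast
  obtain a b where ab: "a \<noteq> 0" "0 < b" "\<And>x. x \<in> convex hull K \<Longrightarrow> b < inner a x"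
    using separating_hyperplane_closed_0[OF convex_convex_hull compact_imp_closed[OF compact_convex_hull[OF cpK]] 0]
    by blast
  define v where "v = a /\<^sub>R norm a"
  define c where "c = min (b / norm a) 1"
  have na: "norm a > 0" using ab by simp
  have "\<forall>u. normal_vector B z u \<longrightarrow> inner u v > c * norm u"
  proof (intro allI impI)
    fix u assume u: "normal_vector B z u"
    have u0: "u \<noteq> 0" using u by (simp add: normal_vector_def)
    have "(1 / norm u) *\<^sub>R u \<in> K"
      using normal_unit[OF u] u0 by (simp add: K_def N_def scaleR_conv_of_real norm_divide)
    then have "b < inner a ((1 / norm u) *\<^sub>R u)" by (rule ab(3)[OF subsetD[OF hull_subset]])
    then have "b < inner a u / norm u" by simp
    then have "b * norm u < inner a u" using u0 by (simp add: field_simps)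
    then have "b / norm a * norm u < inner u v" using na by (simp add: v_def inner_commute field_simps)
    moreover have "c * norm u \<le> b / norm a * norm u" unfolding c_def by (rule mult_right_mono) auto
    ultimately show "inner u v > c * norm u" by linarith
  qed
  moreover have "norm v = 1" using na by (simp add: v_def)
  moreover have "0 < c" "c \<le> 1" using ab na by (auto simp: c_def)
  ultimately show ?thesis by (intro exI[of _ v] exI[of _ c]) simp
qed

lemma near_bound:
  assumes ss: "semi_smooth B" and z: "z \<in> frontier B" and v: "norm v = 1" and c: "c > 0"
    and hv: "\<And>u. normal_vector B z u \<Longrightarrow> inner u v > c * norm u"
  shows "\<exists>r>0. \<forall>w u. w \<in> frontier B \<longrightarrow> dist w z < r \<longrightarrow> normal_vector B w u \<longrightarrow> inner u v > c/2 * norm u"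
proof (rule ccontr)
  assume neg: "\<not> ?thesis"
  have "\<forall>n. \<exists>w u. w \<in> frontier B \<and> dist w z < inverse (real (Suc n)) \<and> normal_vector B w u \<and> \<not> inner u v > c/2 * norm u"
  proof
    fix n
    have "inverse (real (Suc n)) > 0" by simp
    then show "\<exists>w u. w \<in> frontier B \<and> dist w z < inverse (real (Suc n)) \<and> normal_vector B w u \<and> \<not> inner u v > c/2 * norm u"
      using neg by blast
  qed
  then have "\<exists>W. \<forall>n. \<exists>u. W n \<in> frontier B \<and> dist (W n) z < inverse (real (Suc n)) \<and> normal_vector B (W n) u \<and> \<not> inner u v > c/2 * norm u"
    by (rule choice)
  then obtain W where "\<forall>n. \<exists>u. W n \<in> frontier B \<and> dist (W n) z < inverse (real (Suc n)) \<and> normal_vector B (W n) u \<and> \<not> inner u v > c/2 * norm u"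
    by blast
  then have "\<exists>U. \<forall>n. W n \<in> frontier B \<and> dist (W n) z < inverse (real (Suc n)) \<and> normal_vector B (W n) (U n) \<and> \<not> inner (U n) v > c/2 * norm (U n)"
    by (rule choice)
  then obtain U where WU': "\<forall>n. W n \<in> frontier B \<and> dist (W n) z < inverse (real (Suc n)) \<and> normal_vector B (W n) (U n) \<and> \<not> inner (U n) v > c/2 * norm (U n)"
    by blast
  have WU: "\<And>n. W n \<in> frontier B" "\<And>n. dist (W n) z < inverse (real (Suc n))"
     "\<And>n. normal_vector B (W n) (U n)" "\<And>n. \<not> inner (U n) v > c/2 * norm (U n)"
    using WU' by auto
  define E where "E n = U n / of_real (norm (U n))" for n
  have U0: "U n \<noteq> 0" for n using WU(3)[of n] by (simp add: normal_vector_def)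
  have Es: "E n \<in> sphere 0 1" for n using U0[of n] by (simp add: E_def norm_divide)
  have En: "normal_vector B (W n) (E n)" for n using normal_unit[OF WU(3)] by (simp add: E_def)
  have Ei: "inner (E n) v \<le> c/2" for n
  proof -
    have "E n = (1 / norm (U n)) *\<^sub>R U n" by (simp add: E_def scaleR_conv_of_real)
    then have "inner (E n) v = inner (U n) v / norm (U n)" by simp
    moreover have "inner (U n) v \<le> c/2 * norm (U n)" using WU(4)[of n] by linarith
    moreover have "norm (U n) > 0" using U0[of n] by simp
    ultimately show ?thesis by (simp add: divide_le_eq)
  qed
  have "\<exists>l\<in>sphere 0 1. \<exists>r. strict_mono r \<and> (E \<circ> r) \<longlonglongrightarrow> l"
    using compact_imp_seq_compact[OF compact_sphere[of 0 1]] Es unfolding seq_compact_def by blast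
  then obtain l r where l: "l \<in> sphere 0 1" "strict_mono r" "(E \<circ> r) \<longlonglongrightarrow> l"
    by blast
  have "(\<lambda>n. W n - z) \<longlonglongrightarrow> 0"
    by (rule Lim_null_comparison[OF _ LIMSEQ_inverse_real_of_nat])
       (use WU(2) in \<open>auto simp: dist_norm intro!: always_eventually less_imp_le\<close>)
  then have "W \<longlonglongrightarrow> z" by (simp add: Lim_null[symmetric])
  then have Wr: "(W \<circ> r) \<longlonglongrightarrow> z" using LIMSEQ_subseq_LIMSEQ l(2) by blast
  have l0: "l \<noteq> 0" using l(1) by auto
  have "normal_vector B z l"
    by (rule ss_lim[OF ss, of "W \<circ> r" "E \<circ> r"]) (use WU En Wr l l0 in auto)
  then have "inner l v > c * norm l" by (rule hv)
  moreover have "inner l v \<le> c/2"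
  proof (rule LIMSEQ_le_const2)
    show "(\<lambda>n. inner ((E \<circ> r) n) v) \<longlonglongrightarrow> inner l v" by (intro tendsto_intros l(3))
    show "\<exists>N. \<forall>n\<ge>N. inner ((E \<circ> r) n) v \<le> c/2" using Ei by auto
  qed
  ultimately show False using l(1) c by simp
qed



lemma mono_dir:
  assumes cl: "closed B" and d: "d \<noteq> 0"
    and hyp: "\<And>w u. w \<in> frontier B \<Longrightarrow> dist w z < r \<Longrightarrow> normal_vector B w u \<Longrightarrow> inner u d > 0"
    and q: "q \<notin> B" and s: "s > 0" and dq: "dist q z + s * norm d < r"
  shows "q + of_real s * d \<notin> B"
proof
  assume pB: "q + of_real s * d \<in> B"
  have "open (- B)" using cl by auto
  then obtain \<rho>0 where r0: "\<rho>0 > 0" "ball q \<rho>0 \<subseteq> - B" using q by (meson ComplI open_contains_ball)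
  have nd: "norm d > 0" using d by simp
  define \<rho> where "\<rho> = min (\<rho>0 / (2 * norm d)) ((r - dist q z - s * norm d) / (2 * norm d))"
  have \<rho>: "\<rho> > 0" using r0 nd dq by (simp add: \<rho>_def)
  have r1: "\<rho> \<le> \<rho>0 / (2 * norm d)" "\<rho> \<le> (r - dist q z - s * norm d) / (2 * norm d)"
    by (simp_all add: \<rho>_def)
  have "\<rho> * norm d \<le> \<rho>0 / 2" using r1(1) nd by (simp add: field_simps)
  then have "cball q (\<rho> * norm d) \<subseteq> ball q \<rho>0" using r0 by (auto simp: subset_eq)
  then have free: "cball q (\<rho> * norm d) \<inter> B = {}" using r0 by blast
  have rr: "\<rho> * norm d \<le> (r - dist q z - s * norm d) / 2" using r1(2) nd by (simp add: field_simps)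
  show False
  proof (rule key[OF cl d s \<rho> free pB])
    fix w u assume w: "w \<in> frontier B" "w \<in> cball q ((\<rho> + s) * norm d)" "normal_vector B w u"
    have "dist w z \<le> dist w q + dist q z" by (rule dist_triangle)
    also have "dist w q \<le> (\<rho> + s) * norm d" using w(2) by (simp add: dist_commute)
    finally have "dist w z < r" using rr dq nd \<rho> by (simp add: algebra_simps)
    then show "inner u d > 0" using hyp w by blast
  qed
qed

lemma dir_ok:
  assumes v: "norm v = 1" and hu: "inner u v > c/2 * norm u" and dv: "norm (d - v) \<le> c/2"
  shows "inner u d > 0"
proof -
  have "\<bar>inner u (d - v)\<bar> \<le> norm u * norm (d - v)" by (rule Cauchy_Schwarz_ineq2)
  also have "\<dots> \<le> norm u * (c/2)" using dv by (intro mult_left_mono) auto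
  finally have "\<bar>inner u (d - v)\<bar> \<le> norm u * (c/2)" .
  then have "- (norm u * (c/2)) \<le> inner u (d - v)" by (simp add: abs_le_iff)
  moreover have "inner u (d - v) = inner u d - inner u v" by (rule inner_diff_right)
  ultimately show ?thesis using hu by (simp add: algebra_simps)
qed



lemma local_chart:
  assumes ss: "semi_smooth B" and z: "z \<in> frontier B"
  shows "\<exists>U V. z \<in> U \<and> openin (top_of_set B) U \<and> openin (top_of_set upper_half_plane) V \<and> U homeomorphic V"
proof -
  have cl: "closed B" using ss by (simp add: semi_smooth_def)
  have zB: "z \<in> B" using z cl by (simp add: frontier_def closure_closed)
  obtain v c where v: "norm v = 1" and c: "0 < c" "c \<le> 1"
      and hv: "\<And>u. normal_vector B z u \<Longrightarrow> inner u v > c * norm u"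
    using cone_sep[OF ss z] by blast
  obtain r where r: "r > 0"
      and hr: "\<And>w u. w \<in> frontier B \<Longrightarrow> dist w z < r \<Longrightarrow> normal_vector B w u \<Longrightarrow> inner u v > c/2 * norm u"
    using near_bound[OF ss z v c(1) hv] by blast
  have v0: "v \<noteq> 0" using v by auto
  have dnz: "d \<noteq> 0" if "norm (d - v) \<le> c/2" for d
  proof
    assume "d = 0" then show False using that v c by simp
  qed
  have dnorm: "norm d \<le> 2" if "norm (d - v) \<le> c/2" for d
  proof -
    have "norm d \<le> norm (d - v) + norm v" using norm_triangle_sub[of d v] by simp
    then show ?thesis using that v c by simp
  qed
  have MONO: "q + of_real s * d \<notin> B"
    if "norm (d - v) \<le> c/2" "q \<notin> B" "s > 0" "dist q z + s * norm d < r" for q s d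
  proof (rule mono_dir[OF cl dnz[OF that(1)] _ that(2,3,4)])
    fix w u assume "w \<in> frontier B" "dist w z < r" "normal_vector B w u"
    then show "inner u d > 0" using dir_ok[OF v hr that(1)] by blast
  qed
  define P where "P h t = z + (of_real t + \<i> * of_real h) * v" for h t :: real
  have distP: "dist (P h t) z \<le> \<bar>t\<bar> + \<bar>h\<bar>" for h t
  proof -
    have "dist (P h t) z = norm (of_real t + \<i> * of_real h)" using v by (simp add: P_def dist_norm norm_mult)
    also have "\<dots> \<le> norm (of_real t :: complex) + norm (\<i> * of_real h)" by (rule norm_triangle_ineq)
    finally show ?thesis by (simp add: norm_mult)
  qed
  define b where "b = r / 8"
  define a where "a = b * c / 4"
  define L where "L = 2 / c"
  have b: "b > 0" using r by (simp add: b_def)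
  have hb: "r = 8 * b" by (simp add: b_def)
  have a: "a > 0" "a \<le> b / 4" using b c by (auto simp: a_def)
  have L: "L > 0" "L * (2 * a) = b" using c by (auto simp: L_def a_def)
  obtain u0 where u0: "normal_vector B z u0" using ss z by (auto simp: semi_smooth_def)
  obtain \<delta>0 where \<delta>0: "\<delta>0 > 0" "\<And>t. 0 < t \<Longrightarrow> t < \<delta>0 \<Longrightarrow> z + of_real t * (u0 / of_real (norm u0)) \<notin> B"
    using normal_free[OF u0] by blast
  define t0 where "t0 = min (\<delta>0 / 2) (b * c / 4)"
  have t0: "t0 > 0" "t0 < \<delta>0" "t0 \<le> b * c / 4" using \<delta>0 b c by (auto simp: t0_def)
  define e0 where "e0 = u0 / of_real (norm u0)"
  have ne0: "norm e0 = 1" using u0 by (simp add: e0_def normal_vector_def norm_divide)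
  define q0 where "q0 = z + of_real t0 * e0"
  have q0: "q0 \<notin> B" using \<delta>0(2)[OF t0(1,2)] by (simp add: q0_def e0_def)
  have dq0: "dist q0 z = t0" using ne0 t0 by (simp add: q0_def dist_norm norm_mult)

  have bot: "P h (-b) \<in> B" if "\<bar>h\<bar> \<le> a" for h
  proof (rule ccontr)
    assume nb: "P h (-b) \<notin> B"
    define d where "d = (1 - \<i> * of_real (h / b)) * v"
    have "norm (d - v) = \<bar>h\<bar> / b" using v b by (simp add: d_def algebra_simps norm_mult norm_divide)
    also have "\<dots> \<le> c / 2" using that a b c using mult_pos_pos[OF b c(1)] by (simp add: divide_le_eq a_def mult.commute)
    finally have dv: "norm (d - v) \<le> c / 2" .
    have "P h (-b) + of_real b * d = z" using b by (simp add: P_def d_def algebra_simps)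
    moreover have "dist (P h (-b)) z + b * norm d < r"
    proof -
      have "dist (P h (-b)) z \<le> b + a" using distP[of h "-b"] that b by simp
      moreover have "b * norm d \<le> b * 2" using dnorm[OF dv] b by simp
      ultimately show ?thesis using a b hb by linarith
    qed
    ultimately have "z \<notin> B" using MONO[OF dv nb b] by simp
    then show False using zB by simp
  qed
  have top: "P h b \<notin> B" if "\<bar>h\<bar> \<le> a" for h
  proof -
    define d where "d = (P h b - q0) / of_real b"
    have eq: "P h b = q0 + of_real b * d" using b by (simp add: d_def)
    have "d - v = (\<i> * of_real h * v - of_real t0 * e0) / of_real b"
      using b by (simp add: d_def P_def q0_def field_simps)
    then have "norm (d - v) \<le> (norm (\<i> * of_real h * v) + norm (of_real t0 * e0)) / b"
      using b by (simp add: norm_divide divide_right_mono norm_triangle_ineq4)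
    also have "\<dots> = (\<bar>h\<bar> + t0) / b" using v ne0 t0 by (simp add: norm_mult)
    also have "\<dots> \<le> c / 2" using that t0 b using mult_pos_pos[OF b c(1)] by (simp add: divide_le_eq a_def mult.commute)
    finally have dv: "norm (d - v) \<le> c / 2" .
    have "dist q0 z + b * norm d < r"
    proof -
      have "b * norm d \<le> b * 2" using dnorm[OF dv] b by simp
      moreover have "t0 \<le> b"
      proof -
        have "b * c \<le> b * 1" using mult_left_mono[OF c(2), of b] b by simp
        then show ?thesis using t0(3) b by linarith
      qed
      ultimately show ?thesis using dq0 b hb by linarith
    qed
    then show ?thesis using MONO[OF dv q0 b] eq by simp
  qed
  have col: "P h t' \<in> B" if "\<bar>h\<bar> \<le> a" "\<bar>t\<bar> \<le> b" "\<bar>t'\<bar> \<le> b" "t' < t" "P h t \<in> B" for h t t'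
  proof (rule ccontr)
    assume nb: "P h t' \<notin> B"
    have dv: "norm (v - v) \<le> c / 2" using c by simp
    have "P h t' + of_real (t - t') * v = P h t" by (simp add: P_def algebra_simps)
    moreover have "dist (P h t') z + (t - t') * norm v < r"
    proof -
      have "dist (P h t') z \<le> b + a" using distP[of h t'] that by simp
      then show ?thesis using that v a b hb by simp
    qed
    ultimately have "P h t \<notin> B" using MONO[OF dv nb, of "t - t'"] that by simp
    then show False using that by simp
  qed
  have lip: "P h' (t - L * \<bar>h - h'\<bar>) \<in> B"
    if "\<bar>h\<bar> \<le> a" "\<bar>h'\<bar> \<le> a" "\<bar>t\<bar> \<le> b" "h \<noteq> h'" "P h t \<in> B" for h h' t
  proof (rule ccontr)
    define s where "s = L * \<bar>h - h'\<bar>"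
    assume nb: "P h' (t - s) \<notin> B"
    have s: "s > 0" using L that by (simp add: s_def)
    have sb: "s \<le> b"
    proof -
      have "\<bar>h - h'\<bar> \<le> 2 * a" using that by linarith
      then have "s \<le> L * (2 * a)" unfolding s_def using L by (intro mult_left_mono) auto
      then show ?thesis using L by simp
    qed
    define d where "d = (1 + \<i> * of_real ((h - h') / s)) * v"
    have "d - v = (\<i> * v) * of_real ((h - h') / s)" by (simp add: d_def algebra_simps)
    then have "norm (d - v) = norm (\<i> * v) * norm (of_real ((h - h') / s) :: complex)" by (simp only: norm_mult)
    moreover have "norm (of_real ((h - h') / s) :: complex) = \<bar>h - h'\<bar> / s" using s by (simp only: norm_of_real abs_divide)
    ultimately have "norm (d - v) = \<bar>h - h'\<bar> / s" using v by (simp only: norm_mult) simp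
    also have "\<dots> = c / 2" using s L c that by (simp add: s_def L_def field_simps)
    finally have dv: "norm (d - v) \<le> c / 2" by simp
    have e0: "of_real s * of_real ((h - h') / s) = (of_real (h - h') :: complex)"
      using s by (simp flip: of_real_mult)
    have e1: "of_real s * d = of_real s * v + \<i> * of_real (h - h') * v"
      using s by (simp add: d_def distrib_left distrib_right e0[symmetric] mult.assoc mult.left_commute)
    have "P h' (t - s) + of_real s * d = z + (of_real (t - s) + \<i> * of_real h') * v + (of_real s * v + \<i> * of_real (h - h') * v)"
      by (simp only: P_def e1)
    also have "\<dots> = P h t" by (simp add: P_def algebra_simps)
    finally have "P h' (t - s) + of_real s * d = P h t" .
    moreover have "dist (P h' (t - s)) z + s * norm d < r"
    proof -
      have "dist (P h' (t - s)) z \<le> \<bar>t - s\<bar> + \<bar>h'\<bar>" by (rule distP)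
      also have "\<dots> \<le> 2 * b + a" using that sb s by linarith
      finally have 1: "dist (P h' (t - s)) z \<le> 2 * b + a" .
      have "s * norm d \<le> b * 2" using dnorm[OF dv] sb s by (intro mult_mono) auto
      then show ?thesis using 1 a b hb by linarith
    qed
    ultimately have "P h t \<notin> B" using MONO[OF dv nb s] by simp
    then show False using that by simp
  qed
  define f where "f h = Sup {t. -b \<le> t \<and> t \<le> b \<and> P h t \<in> B}" for h
  have fprops: "-b \<le> f h \<and> f h < b \<and> (\<forall>t. -b \<le> t \<longrightarrow> t \<le> b \<longrightarrow> (P h t \<in> B \<longleftrightarrow> t \<le> f h))"
    if h: "\<bar>h\<bar> \<le> a" for h
  proof -
    define S where "S = {t. -b \<le> t \<and> t \<le> b \<and> P h t \<in> B}"
    have mb: "-b \<in> S" using bot[OF h] b by (simp add: S_def)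
    have bdd: "bdd_above S" unfolding bdd_above_def S_def by (rule exI[of _ b]) auto
    have "S = {-b..b} \<inter> (\<lambda>t. P h t) -` B" by (auto simp: S_def)
    moreover have "closed ((\<lambda>t. P h t) -` B)"
      by (rule continuous_closed_vimage[OF cl]) (auto simp: P_def intro!: continuous_intros)
    ultimately have clS: "closed S" by (simp add: closed_Int)
    have fS: "f h \<in> S" using closed_contains_Sup[OF _ bdd clS] mb by (auto simp: f_def S_def[symmetric])
    have up: "t \<le> f h" if "t \<in> S" for t using cSup_upper[OF that bdd] by (simp add: f_def S_def)
    have fb: "f h \<noteq> b" using fS top[OF h] by (auto simp: S_def)
    have char: "P h t \<in> B \<longleftrightarrow> t \<le> f h" if "-b \<le> t" "t \<le> b" for t
    proof
      assume "P h t \<in> B" then show "t \<le> f h" using up that by (simp add: S_def)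
    next
      assume tf: "t \<le> f h"
      show "P h t \<in> B"
      proof (cases "t = f h")
        case True then show ?thesis using fS by (simp add: S_def)
      next
        case False
        then have "t < f h" using tf by simp
        moreover have "-b \<le> f h" "f h \<le> b" "P h (f h) \<in> B" using fS by (auto simp: S_def)
        ultimately show ?thesis using col[OF h, of "f h" t] that by (simp add: abs_le_iff)
      qed
    qed
    show ?thesis using fS fb char by (auto simp: S_def)
  qed
  have flip: "f h - L * \<bar>h - h'\<bar> \<le> f h'" if h: "\<bar>h\<bar> \<le> a" "\<bar>h'\<bar> \<le> a" for h h'
  proof (cases "h = h'")
    case True then show ?thesis using L by simp
  next
    case False
    show ?thesis
    proof (cases "f h - L * \<bar>h - h'\<bar> < -b")
      case True then show ?thesis using fprops[OF h(2)] by linarith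
    next
      case False
      have fh: "-b \<le> f h" "f h < b" using fprops[OF h(1)] by auto
      have inB: "P h (f h) \<in> B" using fprops[OF h(1)] fh by auto
      have "P h' (f h - L * \<bar>h - h'\<bar>) \<in> B"
        using lip[OF h(1) h(2) _ \<open>h \<noteq> h'\<close> inB] fh by simp
      moreover have "f h - L * \<bar>h - h'\<bar> \<le> b" using fh L by (smt (verit) mult_nonneg_nonneg abs_ge_zero)
      ultimately show ?thesis using fprops[OF h(2)] False by simp
    qed
  qed
  define clamp where "clamp h = max (-a) (min a h)" for h
  define F where "F h = f (clamp h)" for h
  have clamp: "\<bar>clamp h\<bar> \<le> a" "\<bar>h\<bar> \<le> a \<Longrightarrow> clamp h = h" "\<bar>clamp x - clamp y\<bar> \<le> \<bar>x - y\<bar>" for h x y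
    using a by (auto simp: clamp_def)
  have Flip: "L-lipschitz_on UNIV F"
    unfolding lipschitz_on_def
  proof (intro conjI ballI)
    show "0 \<le> L" using L by simp
    fix x y :: real
    have "\<bar>f (clamp x) - f (clamp y)\<bar> \<le> L * \<bar>clamp x - clamp y\<bar>"
      using flip[OF clamp(1) clamp(1), of x y] flip[OF clamp(1) clamp(1), of y x] by (simp add: abs_minus_commute)
    also have "\<dots> \<le> L * \<bar>x - y\<bar>" using clamp(3) L by (intro mult_left_mono) auto
    finally show "dist (F x) (F y) \<le> L * dist x y" by (simp add: F_def dist_real_def)
  qed
  have contF: "continuous_on UNIV F" by (rule lipschitz_on_continuous_on[OF Flip])
  have contFR: "continuous_on UNIV (\<lambda>y. F (Re y))"
    by (rule continuous_on_compose2[OF contF]) (auto intro: continuous_intros)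
  define Hc where "Hc w = Im ((w - z) / v)" for w
  define Tc where "Tc w = Re ((w - z) / v)" for w
  have contH: "continuous_on UNIV Hc" unfolding Hc_def by (intro continuous_intros) (use v0 in auto)
  have contT: "continuous_on UNIV Tc" unfolding Tc_def by (intro continuous_intros) (use v0 in auto)
  have contFH: "continuous_on UNIV (\<lambda>w. F (Hc w))"
    by (rule continuous_on_compose2[OF contF contH]) auto
  have PHT: "P (Hc w) (Tc w) = w" for w
  proof -
    have "of_real (Tc w) + \<i> * of_real (Hc w) = (w - z) / v" by (simp add: Tc_def Hc_def complex_eq_iff)
    then show ?thesis using v0 by (simp add: P_def)
  qed
  have HP: "Hc (P h t) = h" "Tc (P h t) = t" for h t using v0 by (simp_all add: P_def Hc_def Tc_def)
  define U where "U = B \<inter> {w. \<bar>Hc w\<bar> < a \<and> \<bar>Tc w\<bar> < b}"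
  define V where "V = upper_half_plane \<inter> {y. \<bar>Re y\<bar> < a \<and> Im y < F (Re y) + b}"
  have oU: "openin (top_of_set B) U" unfolding U_def
    by (intro openin_open_Int open_Collect_conj open_Collect_less continuous_intros contH contT)
  have oV: "openin (top_of_set upper_half_plane) V" unfolding V_def
    by (intro openin_open_Int open_Collect_conj open_Collect_less continuous_intros contFR)
  have zU: "z \<in> U" using zB a b by (simp add: U_def Hc_def Tc_def)
  define \<Phi> where "\<Phi> w = of_real (Hc w) + \<i> * of_real (F (Hc w) - Tc w)" for w
  define \<Psi> where "\<Psi> y = P (Re y) (F (Re y) - Im y)" for y
  have "homeomorphism U V \<Phi> \<Psi>"
  proof (rule homeomorphismI)
    show "continuous_on U \<Phi>" unfolding \<Phi>_def
      by (rule continuous_on_subset[of UNIV]) (intro continuous_intros contH contT contFH, simp)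
    show "continuous_on V \<Psi>" unfolding \<Psi>_def P_def
      by (rule continuous_on_subset[of UNIV]) (intro continuous_intros contFR, simp)
    show "\<Phi> ` U \<subseteq> V"
    proof
      fix y assume "y \<in> \<Phi> ` U"
      then obtain w where w: "w \<in> U" "y = \<Phi> w" by blast
      have h: "\<bar>Hc w\<bar> < a" "\<bar>Tc w\<bar> < b" "w \<in> B" using w by (auto simp: U_def)
      have Fh: "F (Hc w) = f (Hc w)" using h clamp(2) by (simp add: F_def)
      have "P (Hc w) (Tc w) \<in> B" using PHT h by simp
      then have "Tc w \<le> f (Hc w)" using fprops[of "Hc w"] h by auto
      then show "y \<in> V" using w(2) h Fh by (simp add: V_def upper_half_plane_def \<Phi>_def)
    qed
    show "\<Psi> ` V \<subseteq> U"
    proof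
      fix x assume "x \<in> \<Psi> ` V"
      then obtain y where y: "y \<in> V" "x = \<Psi> y" by blast
      have h: "\<bar>Re y\<bar> < a" "0 \<le> Im y" "Im y < F (Re y) + b" using y by (auto simp: V_def upper_half_plane_def)
      have Fh: "F (Re y) = f (Re y)" using h clamp(2) by (simp add: F_def)
      have fp: "-b \<le> f (Re y)" "f (Re y) < b" using fprops[of "Re y"] h by auto
      have "P (Re y) (f (Re y) - Im y) \<in> B" using fprops[of "Re y"] h Fh fp by auto
      then show "x \<in> U" using y(2) h Fh fp by (simp add: U_def \<Psi>_def HP)
    qed
    show "\<Psi> (\<Phi> w) = w" if "w \<in> U" for w by (simp add: \<Psi>_def \<Phi>_def PHT)
    show "\<Phi> (\<Psi> y) = y" if "y \<in> V" for y by (simp add: \<Psi>_def \<Phi>_def HP complex_eq_iff)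
  qed
  then have "U homeomorphic V" unfolding homeomorphic_def by blast
  then show ?thesis using zU oU oV by blast
qed


theorem theorem9p1:
  fixes B :: "complex set"
  assumes "closed B" and "semi_smooth B"
  shows "manifold_with_boundary_2 B"
  unfolding manifold_with_boundary_2_def
proof
  fix x assume x: "x \<in> B"
  show "\<exists>U V. x \<in> U \<and> openin (top_of_set B) U \<and> openin (top_of_set upper_half_plane) V \<and> U homeomorphic V"
  proof (cases "x \<in> interior B")
    case True
    then obtain e where e: "e > 0" "ball x e \<subseteq> B" by (meson mem_interior)
    have sub: "ball \<i> 1 \<subseteq> upper_half_plane"
    proof
      fix w assume "w \<in> ball \<i> 1"
      then have "norm (w - \<i>) < 1" by (simp add: dist_norm norm_minus_commute)
      moreover have "\<bar>Im (w - \<i>)\<bar> \<le> norm (w - \<i>)" by (rule abs_Im_le_cmod)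
      ultimately show "w \<in> upper_half_plane" by (simp add: upper_half_plane_def)
    qed
    have "openin (top_of_set B) (B \<inter> ball x e)" by (intro openin_open_Int open_ball)
    moreover have "B \<inter> ball x e = ball x e" using e by blast
    moreover have "openin (top_of_set upper_half_plane) (upper_half_plane \<inter> ball \<i> 1)" by (intro openin_open_Int open_ball)
    moreover have "upper_half_plane \<inter> ball \<i> 1 = ball \<i> 1" using sub by blast
    moreover have "ball x e homeomorphic ball \<i> 1" using e by (intro homeomorphic_balls) auto
    ultimately show ?thesis using e by (metis centre_in_ball)
  next
    case False
    then have "x \<in> frontier B" using x assms(1) by (simp add: frontier_def closure_closed)
    then show ?thesis by (rule local_chart[OF assms(2)])
  qed
qed


end
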